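(* There is a constant $c_1>0$ such that for all sufficiently large $N$ there exists a non-feasible pair $(N,M)$ for the family of line graphs of acyclic graphs, and the smallest such $M$ satisfies $M \leq \frac{N^2}{2} - c_1N\sqrt{N}$.
   Context: All graphs are finite and simple; $L(F)$ is the line graph of $F$. For integers $N \ge 1$ and $0\le M\le\binom{N}{2}$, the pair $(N,M)$ is feasible for the family of line graphs of acyclic graphs if there is an acyclic graph $F$ with $N$ edges such that $L(F)$ has exactly $M$ edges; otherwise it is non-feasible. *)

theory Defs
  imports Complex_Main
begin

text \<open>Vertices are natural numbers (a forest with N edges has at most 2N non-isolated vertices,
  and isolated vertices do not matter for edge counts).\<close>

definition simple_graph :: "'a set set \<Rightarrow> bool" where
  "simple_graph E \<longleftrightarrow> finite E \<and> (\<forall>e\<in>E. card e = 2)"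

definition is_cycle :: "'a set set \<Rightarrow> 'a list \<Rightarrow> bool" where
  "is_cycle E vs \<longleftrightarrow> length vs \<ge> 3 \<and> distinct vs \<and>
     (\<forall>i < length vs. {vs ! i, vs ! ((i + 1) mod length vs)} \<in> E)"

definition acyclic_graph :: "'a set set \<Rightarrow> bool" where
  "acyclic_graph E \<longleftrightarrow> simple_graph E \<and> \<not> (\<exists>vs. is_cycle E vs)"

definition line_graph_edges :: "'a set set \<Rightarrow> 'a set set set" where
  "line_graph_edges E = {{e, f} | e f. e \<in> E \<and> f \<in> E \<and> e \<noteq> f \<and> e \<inter> f \<noteq> {}}"

definition feasible_acyclic_line :: "nat \<Rightarrow> nat \<Rightarrow> bool" where
  "feasible_acyclic_line N M \<longleftrightarrow>
     (\<exists>F :: nat set set. acyclic_graph F \<and> card F = N \<and> card (line_graph_edges F) = M)"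

definition non_feasible_acyclic_line :: "nat \<Rightarrow> nat \<Rightarrow> bool" where
  "non_feasible_acyclic_line N M \<longleftrightarrow> 1 \<le> N \<and> M \<le> N choose 2 \<and> \<not> feasible_acyclic_line N M"

end

theory Submission imports Defs begin
definition deg :: "'a set set \<Rightarrow> 'a \<Rightarrow> nat" where
  "deg F x = card {e\<in>F. x \<in> e}"

lemma no_triangle:
  assumes "acyclic_graph F" "{v,p} \<in> F" "{p,q} \<in> F" "{q,v} \<in> F" "v \<noteq> p" "v \<noteq> q" "p \<noteq> q"
  shows False
proof -
  have "is_cycle F [v,p,q]"
    unfolding is_cycle_def
  proof (intro conjI allI impI)
    fix i assume "i < length [v,p,q]"
    then have "i = 0 \<or> i = 1 \<or> i = 2" by auto
    then show "{[v,p,q] ! i, [v,p,q] ! ((i + 1) mod length [v,p,q])} \<in> F"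
      using assms by auto
  qed (use assms in auto)
  then show False using assms(1) unfolding acyclic_graph_def by blast
qed

lemma unique_hit:
  assumes ac: "acyclic_graph F" and a1: "a1 \<in> F" "v \<in> a1" and a2: "a2 \<in> F" "v \<in> a2"
    and b: "b \<in> F" "v \<notin> b" and h1: "a1 \<inter> b \<noteq> {}" and h2: "a2 \<inter> b \<noteq> {}"
  shows "a1 = a2"
proof (rule ccontr)
  assume ne: "a1 \<noteq> a2"
  have c2: "\<And>e. e \<in> F \<Longrightarrow> card e = 2" using ac unfolding acyclic_graph_def simple_graph_def by blast
  obtain p where p: "p \<in> a1" "p \<in> b" using h1 by blast
  obtain q where q: "q \<in> a2" "q \<in> b" using h2 by blast
  have pv: "p \<noteq> v" "q \<noteq> v" using p q b by auto
  from c2[OF a1(1)] obtain x y where xy: "a1 = {x,y}" "x \<noteq> y" by (auto simp: card_2_iff)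
  have A1: "a1 = {v,p}" using xy a1 p pv by auto
  from c2[OF a2(1)] obtain x y where xy: "a2 = {x,y}" "x \<noteq> y" by (auto simp: card_2_iff)
  have A2: "a2 = {v,q}" using xy a2 q pv by auto
  have pq: "p \<noteq> q" using A1 A2 ne by auto
  from c2[OF b(1)] obtain x y where xy: "b = {x,y}" "x \<noteq> y" by (auto simp: card_2_iff)
  have B: "b = {p,q}" using xy p q pq by auto
  show False
    using no_triangle[OF ac, of v p q] A1 A2 B a1 a2 b pv pq by (auto simp: insert_commute)
qed

lemma lg_lower:
  assumes "finite F"
  shows "deg F v choose 2 \<le> card (line_graph_edges F)"
proof -
  let ?A = "{e\<in>F. v \<in> e}"
  have sub: "{X. X \<subseteq> ?A \<and> card X = 2} \<subseteq> line_graph_edges F"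
  proof
    fix X assume "X \<in> {X. X \<subseteq> ?A \<and> card X = 2}"
    then obtain e f where "X = {e,f}" "e \<noteq> f" "e \<in> ?A" "f \<in> ?A" by (auto simp: card_2_iff)
    then show "X \<in> line_graph_edges F" unfolding line_graph_edges_def by blast
  qed
  have fin: "finite (line_graph_edges F)"
    by (rule finite_subset[of _ "Pow F"]) (auto simp: line_graph_edges_def assms)
  have "card {X. X \<subseteq> ?A \<and> card X = 2} = deg F v choose 2"
    unfolding deg_def by (rule n_subsets) (simp add: assms)
  then show ?thesis using card_mono[OF fin sub] by simp
qed

lemma lg_upper1:
  assumes ac: "acyclic_graph F"
  shows "card (line_graph_edges F) \<le> (deg F v choose 2) + (card F - deg F v) + ((card F - deg F v) choose 2)"
proof -
  have fF: "finite F" using ac unfolding acyclic_graph_def simple_graph_def by blast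
  define A where "A = {e\<in>F. v \<in> e}"
  define B where "B = F - A"
  define h where "h b = (SOME a. a \<in> A \<and> a \<inter> b \<noteq> {})" for b
  have fA: "finite A" "finite B" using fF by (auto simp: A_def B_def)
  have cB: "card B = card F - deg F v" unfolding B_def deg_def A_def
    by (rule card_Diff_subset) (use fF in auto)
  have hh: "h b = a" if "a \<in> A" "b \<in> B" "a \<inter> b \<noteq> {}" for a b
  proof -
    have ex: "h b \<in> A \<and> h b \<inter> b \<noteq> {}" unfolding h_def by (rule someI[of _ a]) (use that in auto)
    have "h b \<in> F" "v \<in> h b" "a \<in> F" "v \<in> a" "b \<in> F" "v \<notin> b"
      using ex that by (auto simp: A_def B_def)
    then show ?thesis using unique_hit[OF ac, of "h b" v a b] ex that by blast
  qed
  have sub: "line_graph_edges F \<subseteq> {X. X \<subseteq> A \<and> card X = 2} \<union> (\<lambda>b. {h b, b}) ` B \<union> {X. X \<subseteq> B \<and> card X = 2}"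
  proof
    fix X assume "X \<in> line_graph_edges F"
    then obtain e f where X: "X = {e,f}" "e \<in> F" "f \<in> F" "e \<noteq> f" "e \<inter> f \<noteq> {}"
      unfolding line_graph_edges_def by blast
    consider "e \<in> A" "f \<in> A" | "e \<in> A" "f \<in> B" | "e \<in> B" "f \<in> A" | "e \<in> B" "f \<in> B"
      using X unfolding B_def by blast
    then show "X \<in> {X. X \<subseteq> A \<and> card X = 2} \<union> (\<lambda>b. {h b, b}) ` B \<union> {X. X \<subseteq> B \<and> card X = 2}"
    proof cases
      case 1 then have "X \<subseteq> A \<and> card X = 2" using X by auto
      then show ?thesis by blast
    next
      case 2 then have "h f = e" using hh X by blast
      then show ?thesis using X 2 by blast
    next
      case 3 then have "h e = f" using hh[of f e] X by blast
      then have "X = {h e, e}" using X by auto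
      then show ?thesis using 3 by blast
    next
      case 4 then have "X \<subseteq> B \<and> card X = 2" using X by auto
      then show ?thesis by blast
    qed
  qed
  have "card (line_graph_edges F) \<le> card ({X. X \<subseteq> A \<and> card X = 2} \<union> (\<lambda>b. {h b, b}) ` B \<union> {X. X \<subseteq> B \<and> card X = 2})"
  proof (rule card_mono[OF _ sub])
    have "finite {X. X \<subseteq> A \<and> card X = 2}" by (rule finite_subset[of _ "Pow A"]) (use fA in auto)
    moreover have "finite {X. X \<subseteq> B \<and> card X = 2}" by (rule finite_subset[of _ "Pow B"]) (use fA in auto)
    ultimately show "finite ({X. X \<subseteq> A \<and> card X = 2} \<union> (\<lambda>b. {h b, b}) ` B \<union> {X. X \<subseteq> B \<and> card X = 2})"
      using fA by blast
  qed
  also have "\<dots> \<le> card {X. X \<subseteq> A \<and> card X = 2} + card ((\<lambda>b. {h b, b}) ` B) + card {X. X \<subseteq> B \<and> card X = 2}"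
    by (metis (no_types, lifting) add_le_mono card_Un_le le_trans order_refl)
  also have "\<dots> \<le> (deg F v choose 2) + card B + (card B choose 2)"
    using n_subsets[OF fA(1), of 2] n_subsets[OF fA(2), of 2] card_image_le[OF fA(2), of "\<lambda>b. {h b, b}"]
    by (simp add: deg_def A_def)
  finally show ?thesis using cB by simp
qed

lemma lg_upper2:
  assumes ac: "acyclic_graph F" and D: "\<And>x. deg F x \<le> D"
  shows "card (line_graph_edges F) \<le> card F * (2 * (D - 1))"
proof -
  have fF: "finite F" using ac unfolding acyclic_graph_def simple_graph_def by blast
  have c2: "\<And>e. e \<in> F \<Longrightarrow> card e = 2" using ac unfolding acyclic_graph_def simple_graph_def by blast
  let ?S = "\<lambda>e. {f\<in>F. f \<noteq> e \<and> e \<inter> f \<noteq> {}}"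
  have sub: "line_graph_edges F \<subseteq> (\<Union>e\<in>F. (\<lambda>f. {e,f}) ` ?S e)"
    unfolding line_graph_edges_def by blast
  have each: "card ((\<lambda>f. {e,f}) ` ?S e) \<le> 2 * (D - 1)" if e: "e \<in> F" for e
  proof -
    obtain a b where ab: "e = {a,b}" "a \<noteq> b" using c2[OF e] by (auto simp: card_2_iff)
    have "?S e \<subseteq> ({f\<in>F. a \<in> f} - {e}) \<union> ({f\<in>F. b \<in> f} - {e})" using ab by auto
    then have "card (?S e) \<le> card (({f\<in>F. a \<in> f} - {e}) \<union> ({f\<in>F. b \<in> f} - {e}))"
      by (rule card_mono[rotated]) (use fF in auto)
    also have "\<dots> \<le> card ({f\<in>F. a \<in> f} - {e}) + card ({f\<in>F. b \<in> f} - {e})" by (rule card_Un_le)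
    also have "\<dots> = (deg F a - 1) + (deg F b - 1)" unfolding deg_def
      using e ab by (simp add: card_Diff_singleton)
    also have "\<dots> \<le> 2 * (D - 1)" using D[of a] D[of b] by simp
    finally show ?thesis using card_image_le[of "?S e" "\<lambda>f. {e,f}"] fF by simp
  qed
  have "card (line_graph_edges F) \<le> card (\<Union>e\<in>F. (\<lambda>f. {e,f}) ` ?S e)"
    by (rule card_mono[OF _ sub]) (use fF in auto)
  also have "\<dots> \<le> (\<Sum>e\<in>F. card ((\<lambda>f. {e,f}) ` ?S e))" by (rule card_UN_le[OF fF])
  also have "\<dots> \<le> (\<Sum>e\<in>F. 2 * (D - 1))" by (rule sum_mono) (use each in auto)
  finally show ?thesis by simp
qed

lemma arith_core:
  fixes N k x I :: int
  assumes x0: "1 \<le> x" and xN: "x \<le> N" and k1: "1 \<le> k" and kN: "k < N"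
    and L: "x * (x - 1) \<le> 2 * I"
    and U1: "2 * I \<le> x * (x - 1) + 2 * (N - x) + (N - x) * (N - x - 1)"
    and U2: "I \<le> N * (2 * (x - 1))"
    and I: "2 * I = (N - k + 1) * (N - k) - 2"
    and cA: "k * (k + 1) + 2 * (k + 1) < 2 * N"
    and cB: "4 * N * k + 2 < (N - k + 1) * (N - k)"
  shows False
proof -
  consider "x \<ge> N - k + 1" | "x \<le> N - k" "x \<ge> k + 1" | "x \<le> k" by linarith
  then show False
  proof cases
    case 1
    have "(N - k + 1) * (N - k) \<le> x * (x - 1)"
      by (rule mult_mono) (use 1 kN in auto)
    then show False using L I by linarith
  next
    case 2
    have e: "x * (x - 1) + 2 * (N - x) + (N - x) * (N - x - 1)
       = (N - k) * (N - k - 1) + (k + 1) * k + 2 * (x - (N - k)) * (x + (N - k) - N - 1)"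
      by (simp add: algebra_simps)
    have "(x - (N - k)) * (x + (N - k) - N - 1) \<le> 0"
      by (rule mult_nonpos_nonneg) (use 2 in auto)
    moreover have "(N - k + 1) * (N - k) = (N - k) * (N - k - 1) + 2 * (N - k)"
      by (simp add: algebra_simps)
    ultimately show False using U1 I e cA by (simp add: algebra_simps)
  next
    case 3
    have "N * x \<le> N * k"
      by (rule mult_left_mono) (use 3 kN k1 in auto)
    moreover have "I \<le> 2 * (N * x) - 2 * N" using U2 by (simp add: algebra_simps)
    moreover have "(N - k + 1) * (N - k) = N * N - 2 * (N * k) + k * k + N - k" by (simp add: algebra_simps)
    moreover have "4 * N * k = 4 * (N * k)" by simp
    ultimately show False using I cB kN k1 by linarith
  qed
qed

lemma k_facts:
  fixes N k :: int
  assumes "k * k \<le> N" "20 \<le> k"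
  shows "k * (k + 1) + 2 * (k + 1) < 2 * N" "4 * N * k + 2 < (N - k + 1) * (N - k)"
proof -
  have "20 * k \<le> k * k" using assms by (intro mult_right_mono) auto
  then have k20: "20 * k \<le> N" using assms by linarith
  show "k * (k + 1) + 2 * (k + 1) < 2 * N" using assms k20 by (simp add: algebra_simps)
  have a: "19 * N \<le> 20 * (N - k)" using k20 by (simp add: algebra_simps)
  have "(19 * N) * (19 * N) \<le> (20 * (N - k)) * (20 * (N - k))"
    by (rule mult_mono) (use a k20 assms in auto)
  moreover have "(19 * N) * (19 * N) = 361 * (N * N)" by simp
  moreover have "(20 * (N - k)) * (20 * (N - k)) = 400 * (N * N) - 800 * (N * k) + 400 * (k * k)"
    by (simp add: algebra_simps)
  moreover have "N * (20 * k) \<le> N * N" by (rule mult_left_mono) (use k20 assms in auto)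
  moreover have "N * (20 * k) = 20 * (N * k)" by simp
  moreover have "(N - k + 1) * (N - k) = N * N - 2 * (N * k) + k * k + N - k" by (simp add: algebra_simps)
  moreover have "4 * N * k = 4 * (N * k)" by simp
  moreover have "N \<ge> 400" using k20 assms by linarith
  moreover have "N * 400 \<le> N * N" by (rule mult_left_mono) (use calculation in auto)
  ultimately show "4 * N * k + 2 < (N - k + 1) * (N - k)" using k20 assms by linarith
qed

lemma two_choose_int: "2 * int (n choose 2) = int n * (int n - 1)"
proof -
  have "2 * (n choose 2) = n * (n - 1)"
  proof (induction n)
    case (Suc m)
    have "Suc m choose 2 = m + (m choose 2)"
      by (simp add: numeral_2_eq_2)
    then show ?case using Suc by (cases m) (auto simp: algebra_simps)
  qed simp
  then have "2 * int (n choose 2) = int (n * (n - 1))" by (metis of_nat_mult of_nat_numeral)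
  then show ?thesis by (cases n) (auto simp: algebra_simps)
qed

lemma not_feasible:
  fixes N k :: nat
  assumes kk: "k * k \<le> N" and k20: "20 \<le> k"
  shows "\<not> feasible_acyclic_line N (((N - k + 1) choose 2) - 1)"
proof
  assume "feasible_acyclic_line N (((N - k + 1) choose 2) - 1)"
  then obtain F :: "nat set set" where ac: "acyclic_graph F" and cF: "card F = N"
    and cI: "card (line_graph_edges F) = ((N - k + 1) choose 2) - 1"
    unfolding feasible_acyclic_line_def by blast
  have fF: "finite F" using ac unfolding acyclic_graph_def simple_graph_def by blast
  have c2: "\<And>e. e \<in> F \<Longrightarrow> card e = 2" using ac unfolding acyclic_graph_def simple_graph_def by blast
  have "20 * k \<le> k * k" using k20 by (intro mult_right_mono) auto
  then have kN: "20 * k \<le> N" using kk by linarith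
  have degN: "deg F x \<le> N" for x unfolding deg_def cF[symmetric] by (rule card_mono[OF fF]) auto
  define D where "D = Max (range (deg F))"
  have finR: "finite (range (deg F))" by (rule finite_subset[of _ "{0..N}"]) (use degN in auto)
  have Dge: "deg F x \<le> D" for x unfolding D_def by (rule Max_ge[OF finR]) auto
  obtain v where v: "deg F v = D" unfolding D_def using Max_in[OF finR] by auto
  have DN: "D \<le> N" using degN v by metis
  have "F \<noteq> {}" using cF kN k20 by auto
  then obtain e where e: "e \<in> F" by blast
  obtain a b where "e = {a,b}" using c2[OF e] by (auto simp: card_2_iff)
  then have "e \<in> {e\<in>F. a \<in> e}" using e by auto
  moreover have "finite {e\<in>F. a \<in> e}" using fF by simp
  ultimately have "card {e\<in>F. a \<in> e} > 0" using card_gt_0_iff by blast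
  then have "deg F a \<ge> 1" unfolding deg_def by simp
  then have D1: "D \<ge> 1" using Dge[of a] by linarith
  define I where "I = card (line_graph_edges F)"
  have L: "D choose 2 \<le> I" unfolding I_def using lg_lower[OF fF, of v] v by simp
  have U1: "I \<le> (D choose 2) + (N - D) + ((N - D) choose 2)"
    unfolding I_def using lg_upper1[OF ac, of v] v cF by simp
  have U2: "I \<le> N * (2 * (D - 1))" unfolding I_def using lg_upper2[OF ac Dge] cF by simp
  have "2 \<le> N - k + 1" using kN k20 by linarith
  then have "0 < (N - k + 1) choose 2" by (rule iffD2[OF zero_less_binomial_iff])
  then have C1: "(N - k + 1) choose 2 \<ge> 1" by linarith
  have Ieq: "I + 1 = (N - k + 1) choose 2" unfolding I_def cI by (rule le_add_diff_inverse2[OF C1])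
  have iL: "int D * (int D - 1) \<le> 2 * int I"
    using two_choose_int[of D] L by linarith
  have iU1: "2 * int I \<le> int D * (int D - 1) + 2 * (int N - int D) + (int N - int D) * (int N - int D - 1)"
    using two_choose_int[of D] two_choose_int[of "N - D"] U1 DN by (simp add: of_nat_diff)
  have "int I \<le> int (N * (2 * (D - 1)))" using U2 by (simp only: of_nat_le_iff)
  then have "int I \<le> int N * (2 * (int D - 1))" using D1 by (simp add: of_nat_diff)
  moreover have iI: "2 * int I = (int N - int k + 1) * (int N - int k) - 2"
  proof -
    have "2 * int I + 2 = 2 * int ((N - k + 1) choose 2)" 
    proof -
      have "int (I + 1) = int ((N - k + 1) choose 2)" using Ieq by (rule arg_cong)
      then have "int I + 1 = int ((N - k + 1) choose 2)" by (simp only: of_nat_add of_nat_1)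
      then show ?thesis by linarith
    qed
    also have "\<dots> = int (N - k + 1) * (int (N - k + 1) - 1)" by (rule two_choose_int)
    also have "int (N - k + 1) = int N - int k + 1" using kN by (simp add: of_nat_diff)
    finally show ?thesis by simp
  qed
  moreover have "int (k * k) \<le> int N" using kk by (simp only: of_nat_le_iff)
  moreover have "int (k * k) = int k * int k" by simp
  ultimately show False
    using arith_core[of "int D" "int N" "int k" "int I"] k_facts[of "int k" "int N"] iL iU1 D1 DN kN k20
    by linarith
qed

theorem mainTheorem9:
  shows "\<exists>c1::real. c1 > 0 \<and> (\<exists>N0::nat. \<forall>N\<ge>N0.
     (\<exists>M. non_feasible_acyclic_line N M) \<and>
     real (LEAST M. non_feasible_acyclic_line N M) \<le> real N ^ 2 / 2 - c1 * real N * sqrt (real N))"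
proof -
  have main: "(\<exists>M. non_feasible_acyclic_line N M) \<and>
     real (LEAST M. non_feasible_acyclic_line N M) \<le> real N ^ 2 / 2 - 1/2 * real N * sqrt (real N)"
    if N400: "N \<ge> 400" for N :: nat
  proof (rule conjI)
  define s where "s = sqrt (real N)"
  define k where "k = nat \<lfloor>s\<rfloor>"
  have s0: "s \<ge> 0" unfolding s_def by simp
  have ss: "s * s = real N" unfolding s_def by simp
  have s20: "s \<ge> 20" unfolding s_def using N400 real_sqrt_le_mono[of 400 "real N"] by simp
  have ks: "real k \<le> s" unfolding k_def using s0 by linarith
  have sk: "s < real k + 1" unfolding k_def using s0 by linarith
  have k20: "20 \<le> k" unfolding k_def using s20 by linarith
  have "real k * real k \<le> s * s" by (rule mult_mono) (use ks s0 in auto)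
  then have "real (k * k) \<le> real N" using ss by simp
  then have kk: "k * k \<le> N" by (simp only: of_nat_le_iff)
  have "20 * k \<le> k * k" using k20 by (intro mult_right_mono) auto
  then have kN: "20 * k \<le> N" using kk by linarith
  define M0 where "M0 = ((N - k + 1) choose 2) - 1"
  have "2 \<le> N - k + 1" using kN k20 by linarith
  then have "0 < (N - k + 1) choose 2" by (rule iffD2[OF zero_less_binomial_iff])
  then have C1: "(N - k + 1) choose 2 \<ge> 1" by linarith
  have eqM: "2 * int M0 = (int N - int k + 1) * (int N - int k) - 2"
  proof -
    have "2 * int M0 + 2 = 2 * int ((N - k + 1) choose 2)" 
    proof -
      have "M0 + 1 = (N - k + 1) choose 2" unfolding M0_def by (rule le_add_diff_inverse2[OF C1])
      then have "int (M0 + 1) = int ((N - k + 1) choose 2)" by (rule arg_cong)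
      then have "int M0 + 1 = int ((N - k + 1) choose 2)" by (simp only: of_nat_add of_nat_1)
      then show ?thesis by linarith
    qed
    also have "\<dots> = int (N - k + 1) * (int (N - k + 1) - 1)" by (rule two_choose_int)
    also have "int (N - k + 1) = int N - int k + 1" using kN by (simp add: of_nat_diff)
    finally show ?thesis by simp
  qed
  have "(int N - int k + 1) * (int N - int k) \<le> int N * (int N - 1)"
    by (rule mult_mono) (use kN k20 in auto)
  then have "2 * int M0 \<le> 2 * int (N choose 2)" using eqM two_choose_int[of N] by linarith
  then have M0le: "M0 \<le> N choose 2" by linarith
  have nf: "non_feasible_acyclic_line N M0"
    unfolding non_feasible_acyclic_line_def M0_def
    using not_feasible[OF kk k20] M0le N400 unfolding M0_def by simp
  then show "\<exists>M. non_feasible_acyclic_line N M" by blast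
  have "(LEAST M. non_feasible_acyclic_line N M) \<le> M0" using nf by (rule Least_le)
  then have "real (LEAST M. non_feasible_acyclic_line N M) \<le> real M0" by simp
  also have "real M0 \<le> real N ^ 2 / 2 - 1 / 2 * real N * sqrt (real N)"
  proof -
    have r: "2 * real M0 = (real N - real k + 1) * (real N - real k) - 2"
      using arg_cong[OF eqM, of real_of_int] by simp
    have a1: "real N * (s - 1) \<le> real N * real k" by (rule mult_left_mono) (use sk in auto)
    have a2: "real N * 4 \<le> real N * s" by (rule mult_left_mono) (use s20 in auto)
    have "real (k * k) \<le> real N" using kk by (simp only: of_nat_le_iff)
    then have a3: "real k * real k \<le> real N" by simp
    have e: "(real N - real k + 1) * (real N - real k)
        = real N * real N - 2 * (real N * real k) + real k * real k + real N - real k"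
      by (simp add: algebra_simps)
    have "2 * real M0 \<le> real N * real N - real N * s"
      using r e a1 a2 a3 by (simp add: algebra_simps)
    then show ?thesis unfolding s_def by (simp add: power2_eq_square algebra_simps)
  qed
  finally show "real (LEAST M. non_feasible_acyclic_line N M) \<le> real N ^ 2 / 2 - 1 / 2 * real N * sqrt (real N)" .
  qed
  show ?thesis
    by (rule exI[of _ "1/2"], rule conjI, simp, rule exI[of _ "400"]) (use main in blast)
qed

end
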